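(* Let $N=2$, $v_1<v_2$, $p(v_1)=p(v_2)=\tfrac12$, and $\lambda,\sigma_Z,T>0$, $G$ the CDF of $N(0,\sigma_Z^2T)$. (a) For an $M$-state signal with probabilities satisfying $q(s_m)=q(s_{M+1-m})$ for all $1\le m\le M$, the Lagrange multipliers $(\mu_1,\mu_2)$ for which the posteriors $p(v_n|s_m)=e^{(v_nI_m+\mu_n)/\lambda}/\sum_{n'=1}^2e^{(v_{n'}I_m+\mu_{n'})/\lambda}$ satisfy $\sum_mp(v_n|s_m)q(s_m)=p(v_n)$, $n=1,2$, are zero (up to the common additive constant), i.e. $\mu_1=\mu_2=0$ is a solution. (b) The same holds for symmetric continuous signals with posteriors $p(v_n|s)=e^{[v_nG^{-1}(Q(s))+\mu_n]/\lambda}/\sum_{n'}e^{[v_{n'}G^{-1}(Q(s))+\mu_{n'}]/\lambda}$ and constraint $\int p(v_n|s)q(s)\,ds=p(v_n)$.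
   Context: For an $M$-state signal with probabilities $q(s_m)$, $Q_0=0$, $Q_m=\sum_{i\le m}q(s_i)$ and $I_m=\frac1{q(s_m)}\int_{Q_{m-1}}^{Q_m}G^{-1}(u)\,du$. For a continuous signal, $q$ is its density and $Q$ its CDF. The multipliers $(\mu_1,\mu_2)$ satisfying the Bayes plausibility constraint are unique up to adding a common constant. *)

theory Defs
  imports "HOL-Probability.Probability"
begin

definition G :: "real \<Rightarrow> real \<Rightarrow> real \<Rightarrow> real" where
  "G sigmaZ T x = (LINT y:{..x}|lborel. normal_density 0 (sqrt (sigmaZ^2 * T)) y)"

text \<open>Quantile function G^{-1} on (0,1); fixed to 0 outside (a null set, irrelevant).\<close>
definition G_inv :: "real \<Rightarrow> real \<Rightarrow> real \<Rightarrow> real" where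
  "G_inv sigmaZ T u = (if 0 < u \<and> u < 1 then (THE x. G sigmaZ T x = u) else 0)"

definition Qd :: "(nat \<Rightarrow> real) \<Rightarrow> nat \<Rightarrow> real" where
  "Qd q m = (\<Sum>i=1..m. q i)"

definition Isig :: "real \<Rightarrow> real \<Rightarrow> (nat \<Rightarrow> real) \<Rightarrow> nat \<Rightarrow> real" where
  "Isig sigmaZ T q m = (1 / q m) * (LINT u:{Qd q (m - 1)..Qd q m}|lborel. G_inv sigmaZ T u)"

definition Qc :: "(real \<Rightarrow> real) \<Rightarrow> real \<Rightarrow> real" where
  "Qc q s = (LINT t:{..s}|lborel. q t)"

definition post :: "real \<Rightarrow> (nat \<Rightarrow> real) \<Rightarrow> (nat \<Rightarrow> real) \<Rightarrow> nat \<Rightarrow> real \<Rightarrow> real" where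
  "post lam v mu n x = exp ((v n * x + mu n) / lam) /
      (\<Sum>n'\<in>{1,2}. exp ((v n' * x + mu n') / lam))"

end

theory Submission
  imports Defs
begin


lemma sli_eq: "set_lebesgue_integral lborel A (f::real\<Rightarrow>real) = (LINT x|lborel. indicator A x * f x)"
  by (simp add: set_lebesgue_integral_def)

lemma flip_int: "(LINT x|lborel. (f::real\<Rightarrow>real) x) = (LINT x|lborel. f (t - x))"
  using lborel_integral_real_affine[where c="-1" and t=t and f=f] by simp

lemma shift_int: "(LINT x|lborel. (f::real\<Rightarrow>real) x) = (LINT x|lborel. f (t + x))"
  using lborel_integral_real_affine[where c="1" and t=t and f=f] by simp

lemma ind_integrable: "integrable lborel (f::real\<Rightarrow>real) \<Longrightarrow> A \<in> sets borel \<Longrightarrow> integrable lborel (\<lambda>t. indicator A t * f t)"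
  using integrable_mult_indicator[of A lborel f] by simp

lemma refl_sum:
  fixes f :: "real \<Rightarrow> real"
  assumes int: "integrable lborel f" and sym: "\<And>s. f (c + s) = f (c - s)"
  shows "(LINT t:{..c-s}|lborel. f t) + (LINT t:{..c+s}|lborel. f t) = (LINT t|lborel. f t)"
proof -
  have fm[measurable]: "f \<in> borel_measurable borel" using int by auto
  have 1: "(LINT t|lborel. indicator {..c-s} t * f t) = (LINT t|lborel. indicator {c+s..} t * f t)"
  proof -
    have "(LINT t|lborel. indicator {..c-s} t * f t) = (LINT t|lborel. indicator {..c-s} (2*c - t) * f (2*c - t))"
      by (rule flip_int)
    also have "\<dots> = (LINT t|lborel. indicator {c+s..} t * f t)"
    proof (rule Bochner_Integration.integral_cong[OF refl])
      fix t
      have "f (2*c - t) = f t" using sym[of "c - t"] by simp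
      moreover have "indicator {..c-s} (2*c - t) = (indicator {c+s..} t :: real)"
        by (simp add: indicator_def)
      ultimately show "indicator {..c-s} (2*c - t) * f (2*c - t) = indicator {c+s..} t * f t" by simp
    qed
    finally show ?thesis .
  qed
  have 2: "(LINT t|lborel. indicator {c+s..} t * f t) = (LINT t|lborel. indicator {c+s<..} t * f t)"
  proof (rule integral_cong_AE)
    show "AE x in lborel. indicator {c+s..} x * f x = indicator {c+s<..} x * f x"
      using AE_lborel_singleton[of "c+s"] by eventually_elim (auto simp: indicator_def)
  qed auto
  have 3: "(LINT t|lborel. indicator {..c+s} t * f t) + (LINT t|lborel. indicator {c+s<..} t * f t)
       = (LINT t|lborel. f t)"
  proof -
    have "(LINT t|lborel. indicator {..c+s} t * f t) + (LINT t|lborel. indicator {c+s<..} t * f t)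
        = (LINT t|lborel. indicator {..c+s} t * f t + indicator {c+s<..} t * f t)"
      by (rule Bochner_Integration.integral_add[symmetric]) (auto intro!: ind_integrable int)
    also have "\<dots> = (LINT t|lborel. f t)"
      by (rule Bochner_Integration.integral_cong) (auto simp: indicator_def)
    finally show ?thesis .
  qed
  show ?thesis using 1 2 3 by (simp add: sli_eq)
qed

lemma post_sym:
  assumes "n \<in> {1,2::nat}"
  shows "post lam v (\<lambda>_. 0) n (- x) + post lam v (\<lambda>_. 0) n x = 1"
proof -
  define a where "a = exp (v 1 * x / lam)"
  define b where "b = exp (v 2 * x / lam)"
  have a: "a > 0" and b: "b > 0" by (auto simp: a_def b_def)
  have ea: "exp (v 1 * - x / lam) = 1 / a" and eb: "exp (v 2 * - x / lam) = 1 / b"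
    by (auto simp: a_def b_def exp_minus inverse_eq_divide)
  have A: "post lam v (\<lambda>_. 0) n (- x) = (if n = 1 then 1/a else 1/b) / (1/a + 1/b)"
    using assms unfolding ea[symmetric] eb[symmetric] by (auto simp: post_def)
  have B: "post lam v (\<lambda>_. 0) n x = (if n = 1 then a else b) / (a + b)"
    using assms unfolding a_def b_def by (auto simp: post_def)
  have "a * a + (b * b + a * (b * 2)) > 0" using a b by (simp add: add_pos_pos)
  then show ?thesis unfolding A B using a b by (auto simp: field_simps)
qed

lemma post_bounds: "0 \<le> post lam v mu n x" "n \<in> {1,2::nat} \<Longrightarrow> post lam v mu n x \<le> 1"
  by (auto simp: post_def add_pos_pos)

lemma post_meas[measurable]: "post lam v mu n \<in> borel_measurable borel"
  unfolding post_def by measurable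



context
  fixes sigmaZ T :: real
  assumes sZ: "sigmaZ > 0" and TT: "T > 0"
begin

abbreviation "sg \<equiv> sqrt (sigmaZ^2 * T)"
abbreviation "nd \<equiv> normal_density 0 sg"

lemma sg_pos: "sg > 0"
proof -
  have "sigmaZ^2 * T > 0" using sZ TT by simp
  then show ?thesis by (rule real_sqrt_gt_zero)
qed

lemma nd_int: "integrable lborel nd" using sg_pos by simp
lemma nd_meas[measurable]: "nd \<in> borel_measurable borel" by (rule borel_measurable_normal_density)

lemma nd_total: "(LINT t|lborel. nd t) = 1"
  by (rule integral_normal_density) (rule sg_pos)

lemma nd_total2: "integral\<^sup>L lborel nd = 1"
  by (rule integral_normal_density) (rule sg_pos)

lemma G_eq: "G sigmaZ T x = (LINT t|lborel. indicator {..x} t * nd t)"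
  by (simp add: G_def sli_eq)

lemma G_diff: assumes "x \<le> y"
  shows "G sigmaZ T y - G sigmaZ T x = (LINT t|lborel. indicator {x<..y} t * nd t)"
proof -
  have "(LINT t|lborel. indicator {..y} t * nd t)
     = (LINT t|lborel. indicator {..x} t * nd t + indicator {x<..y} t * nd t)"
    by (rule Bochner_Integration.integral_cong) (use assms in \<open>auto simp: indicator_def\<close>)
  also have "\<dots> = (LINT t|lborel. indicator {..x} t * nd t) + (LINT t|lborel. indicator {x<..y} t * nd t)"
    by (rule Bochner_Integration.integral_add) (auto intro!: ind_integrable nd_int)
  finally show ?thesis by (simp add: G_eq)
qed

abbreviation "Kc \<equiv> 1 / sqrt (2 * pi * sg\<^sup>2)"

lemma Kc_pos: "Kc > 0" using sg_pos by (simp add: )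

lemma nd_le: "nd t \<le> Kc"
proof -
  have "exp (-(t - 0)\<^sup>2/ (2 * sg\<^sup>2)) \<le> 1" using sg_pos by simp
  then have "exp (-(t - 0)\<^sup>2/ (2 * sg\<^sup>2)) / sqrt (2 * pi * sg\<^sup>2) \<le> 1 / sqrt (2 * pi * sg\<^sup>2)"
    by (intro divide_right_mono) auto
  then show ?thesis by (simp add: normal_density_def )
qed

lemma nd_ge: assumes "x < t" "t \<le> y"
  shows "Kc * exp (- (x^2 + y^2) / (2 * sg^2)) \<le> nd t"
proof -
  have "t^2 \<le> x^2 + y^2"
  proof (cases "t \<ge> 0")
    case True then have "t^2 \<le> y^2" using assms by (intro power_mono) auto
    then show ?thesis by (simp add: add_increasing)
  next
    case False
    have "(-t) * (-t) \<le> (-x) * (-x)" using False assms by (intro mult_mono) auto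
    then have "t^2 \<le> x^2" by (simp add: power2_eq_square)
    then show ?thesis by (simp add: add_increasing2)
  qed
  then have "-(x^2 + y^2) \<le> -(t^2)" by linarith
  then have "(-(x^2 + y^2)) / (2 * sg^2) \<le> (-(t^2)) / (2 * sg^2)"
    using sg_pos by (intro divide_right_mono) auto
  then have "exp (- (x^2 + y^2) / (2 * sg^2)) \<le> exp (- (t^2) / (2 * sg^2))" by simp
  then have "Kc * exp (- (x^2 + y^2) / (2 * sg^2)) \<le> Kc * exp (- (t^2) / (2 * sg^2))"
    by (rule mult_left_mono) (use Kc_pos in simp)
  then show ?thesis by (simp add: normal_density_def)
qed

lemma G_lower: assumes "x < y"
  shows "Kc * exp (- (x^2 + y^2) / (2 * sg^2)) * (y - x) \<le> G sigmaZ T y - G sigmaZ T x"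
proof -
  define c where "c = Kc * exp (- (x^2 + y^2) / (2 * sg^2))"
  have "(LINT t|lborel. indicator {x<..y} t * c) \<le> (LINT t|lborel. indicator {x<..y} t * nd t)"
  proof (rule integral_mono)
    show "integrable lborel (\<lambda>t. indicator {x<..y} t * c)"
      by (intro integrable_mult_left) (use assms in simp)
    show "integrable lborel (\<lambda>t. indicator {x<..y} t * nd t)" by (intro ind_integrable nd_int) simp
    fix t show "indicator {x<..y} t * c \<le> indicator {x<..y} t * nd t"
      using nd_ge[of x t y] by (simp add: c_def indicator_def)
  qed
  moreover have "(LINT t|lborel. indicator {x<..y} t * c) = c * (y - x)"
    using assms by simp
  ultimately show ?thesis using G_diff[of x y] assms by (simp add: c_def mult.commute)
qed

lemma G_upper: assumes "x \<le> y"
  shows "G sigmaZ T y - G sigmaZ T x \<le> Kc * (y - x)"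
proof -
  have "(LINT t|lborel. indicator {x<..y} t * nd t) \<le> (LINT t|lborel. indicator {x<..y} t * Kc)"
  proof (rule integral_mono)
    show "integrable lborel (\<lambda>t. indicator {x<..y} t * Kc)"
      by (intro integrable_mult_left) (use assms in simp)
    show "integrable lborel (\<lambda>t. indicator {x<..y} t * nd t)" by (intro ind_integrable nd_int) simp
    fix t show "indicator {x<..y} t * nd t \<le> indicator {x<..y} t * Kc"
      using nd_le[of t] by (simp add: indicator_def)
  qed
  moreover have "(LINT t|lborel. indicator {x<..y} t * Kc) = Kc * (y - x)"
    using assms by simp
  ultimately show ?thesis using G_diff[of x y] assms by (simp add: mult.commute)
qed

lemma G_strict: "x < y \<Longrightarrow> G sigmaZ T x < G sigmaZ T y"
  using G_lower[of x y] Kc_pos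
  by (smt (verit) exp_gt_zero mult_pos_pos)

lemma G_mono: "x \<le> y \<Longrightarrow> G sigmaZ T x \<le> G sigmaZ T y"
  using G_strict[of x y] by (cases "x = y") auto

lemma G_cont: "continuous_on S (G sigmaZ T)"
proof (rule lipschitz_on_continuous_on[of Kc], rule lipschitz_onI)
  fix x y
  show "dist (G sigmaZ T x) (G sigmaZ T y) \<le> Kc * dist x y"
  proof (cases "x \<le> y")
    case True then show ?thesis using G_upper[of x y] G_mono[of x y] by (simp add: dist_real_def)
  next
    case False then show ?thesis using G_upper[of y x] G_mono[of y x] by (simp add: dist_real_def)
  qed
qed (use Kc_pos in auto)

lemma G_sym: "G sigmaZ T (- x) = 1 - G sigmaZ T x"
proof -
  have "(LINT t:{..0-x}|lborel. nd t) + (LINT t:{..0+x}|lborel. nd t) = (LINT t|lborel. nd t)"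
    by (rule refl_sum[OF nd_int]) (simp add: normal_density_def)
  then show ?thesis using nd_total by (simp add: G_def)
qed

lemma G_lim: "((\<lambda>x. G sigmaZ T x) \<longlongrightarrow> 1) at_top"
proof -
  have "((\<lambda>x. LINT t|lborel. indicator {..x} t * nd t) \<longlongrightarrow> (LINT t|lborel. nd t)) at_top"
  proof (rule integral_dominated_convergence_at_top[where w = nd])
    show "AE t in lborel. ((\<lambda>x. indicator {..x} t * nd t) \<longlongrightarrow> nd t) at_top"
    proof (rule AE_I2)
      fix t
      have "eventually (\<lambda>x. indicator {..x} t * nd t = nd t) at_top"
        using eventually_ge_at_top[of t] by eventually_elim auto
      then show "((\<lambda>x. indicator {..x} t * nd t) \<longlongrightarrow> nd t) at_top"
        by (rule tendsto_eventually)
    qed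
    show "\<forall>\<^sub>F i in at_top. AE x in lborel. norm (indicator {..i} x * nd x) \<le> nd x"
      by (auto simp: indicator_def)
  qed (auto simp: nd_int)
  then have "((\<lambda>x. LINT t|lborel. indicator {..x} t * nd t) \<longlongrightarrow> 1) at_top"
    by (metis nd_total2)
  then show ?thesis by (simp add: G_eq)
qed

lemma G_exists: assumes "0 < u" "u < 1" shows "\<exists>x. G sigmaZ T x = u"
proof -
  have "eventually (\<lambda>x. G sigmaZ T x > max u (1 - u)) at_top"
    using G_lim assms by (intro order_tendstoD) auto
  then obtain N where N: "\<And>x. x \<ge> N \<Longrightarrow> G sigmaZ T x > max u (1 - u)"
    by (auto simp: eventually_at_top_linorder)
  define b where "b = max N 0"
  have b: "G sigmaZ T b > max u (1 - u)" "b \<ge> 0" using N[of b] by (auto simp: b_def)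
  have "G sigmaZ T (- b) \<le> u" using G_sym[of b] b by simp
  moreover have "u \<le> G sigmaZ T b" using b by simp
  ultimately show ?thesis using IVT'[of "G sigmaZ T" "-b" u b] G_cont b by auto
qed

lemma G_inj: "G sigmaZ T x = G sigmaZ T y \<Longrightarrow> x = y"
proof (rule ccontr)
  assume "G sigmaZ T x = G sigmaZ T y" "x \<noteq> y"
  then have "x < y \<or> y < x" by linarith
  then show False using G_strict[of x y] G_strict[of y x] \<open>G sigmaZ T x = G sigmaZ T y\<close> by linarith
qed

lemma G_inv_G: assumes "0 < u" "u < 1" shows "G sigmaZ T (G_inv sigmaZ T u) = u"
proof -
  obtain x where x: "G sigmaZ T x = u" using G_exists assms by blast
  have ex1: "\<exists>!x. G sigmaZ T x = u"
  proof (rule ex1I[of _ x])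
    show "G sigmaZ T x = u" by (rule x)
    fix y assume "G sigmaZ T y = u"
    then show "y = x" using x G_inj[of y x] by simp
  qed
  have "G sigmaZ T (THE x. G sigmaZ T x = u) = u" by (rule theI'[OF ex1])
  then show ?thesis using assms by (simp add: G_inv_def)
qed


lemma G_inv_neg: "G_inv sigmaZ T (1 - u) = - G_inv sigmaZ T u"
proof (cases "0 < u \<and> u < 1")
  case True
  have a: "G sigmaZ T (- G_inv sigmaZ T u) = 1 - G sigmaZ T (G_inv sigmaZ T u)" by (rule G_sym)
  have b: "G sigmaZ T (G_inv sigmaZ T u) = u" using True by (intro G_inv_G) auto
  have c: "G sigmaZ T (G_inv sigmaZ T (1 - u)) = 1 - u" using True by (intro G_inv_G) auto
  show ?thesis by (rule G_inj) (simp only: a b c)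
next
  case False
  then have nf: "\<not> (0 < 1 - u \<and> 1 - u < 1)" by linarith
  have "G_inv sigmaZ T (1 - u) = 0" unfolding G_inv_def by (rule if_not_P[OF nf])
  moreover have "G_inv sigmaZ T u = 0" unfolding G_inv_def by (rule if_not_P[OF False])
  ultimately show ?thesis by simp
qed

lemma G_inv_out: "\<not> (0 < u \<and> u < 1) \<Longrightarrow> G_inv sigmaZ T u = 0"
  unfolding G_inv_def by (rule if_not_P)

lemma G_inv_le_iff: assumes "0 < u" "u < 1"
  shows "G_inv sigmaZ T u \<le> a \<longleftrightarrow> u \<le> G sigmaZ T a"
proof
  assume "G_inv sigmaZ T u \<le> a"
  then show "u \<le> G sigmaZ T a" using G_mono G_inv_G[OF assms] by metis
next
  assume "u \<le> G sigmaZ T a"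
  then show "G_inv sigmaZ T u \<le> a" using G_strict[of a "G_inv sigmaZ T u"] G_inv_G[OF assms] by force
qed

lemma G_inv_meas[measurable]: "G_inv sigmaZ T \<in> borel_measurable borel"
proof (subst borel_measurable_iff_le, intro allI)
  fix a
  have "{w \<in> space borel. G_inv sigmaZ T w \<le> a} =
      ({0<..<1} \<inter> {..G sigmaZ T a}) \<union> (if 0 \<le> a then - {0<..<1} else {})"
  proof (intro set_eqI iffI)
    fix w assume "w \<in> {w \<in> space borel. G_inv sigmaZ T w \<le> a}"
    then show "w \<in> ({0<..<1} \<inter> {..G sigmaZ T a}) \<union> (if 0 \<le> a then - {0<..<1} else {})"
      using G_inv_le_iff[of w a] by (cases "0 < w \<and> w < 1") (auto simp: G_inv_out)
  next
    fix w assume "w \<in> ({0<..<1} \<inter> {..G sigmaZ T a}) \<union> (if 0 \<le> a then - {0<..<1} else {})"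
    then show "w \<in> {w \<in> space borel. G_inv sigmaZ T w \<le> a}"
      using G_inv_le_iff[of w a] by (cases "0 < w \<and> w < 1") (auto simp: G_inv_out split: if_splits)
  qed
  then show "{w \<in> space borel. G_inv sigmaZ T w \<le> a} \<in> sets borel" by simp
qed

end


lemma flip01: "(LINT u:{1-b..1-a}|lborel. (g::real\<Rightarrow>real) u) = (LINT w:{a..b}|lborel. g (1 - w))"
proof -
  have "(LINT u|lborel. indicator {1-b..1-a} u * g u) = (LINT w|lborel. indicator {1-b..1-a} (1 - w) * g (1 - w))"
    by (rule flip_int)
  also have "\<dots> = (LINT w|lborel. indicator {a..b} w * g (1 - w))"
    by (rule Bochner_Integration.integral_cong) (auto simp: indicator_def)
  finally show ?thesis by (simp add: sli_eq)
qed

lemma rev_sum: "(\<Sum>m=1..M. (h::nat\<Rightarrow>real) m) = (\<Sum>m=1..M. h (M + 1 - m))"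
  by (rule sum.reindex_bij_witness[where i="\<lambda>m. M + 1 - m" and j="\<lambda>m. M + 1 - m"]) auto

lemma Qd_rev:
  assumes sym: "\<forall>m\<in>{1..M}. q m = q (M + 1 - m)" and tot: "(\<Sum>m=1..M. q m) = 1" and k: "k \<le> M"
  shows "Qd q (M - k) = 1 - Qd q k"
proof -
  have U: "{1..M} = {1..k} \<union> {k+1..M}" using k by auto
  have "(\<Sum>m=1..M. q m) = (\<Sum>m=1..k. q m) + (\<Sum>m=k+1..M. q m)"
    unfolding U by (rule sum.union_disjoint) auto
  moreover have "(\<Sum>m=1..M-k. q m) = (\<Sum>m=k+1..M. q m)"
  proof (rule sum.reindex_bij_witness[where i="\<lambda>m. M + 1 - m" and j="\<lambda>m. M + 1 - m"])
    fix a assume a: "a \<in> {1..M-k}"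
    then show "q (M + 1 - a) = q a" using sym k by auto
  qed (use k in auto)
  ultimately show ?thesis using tot by (simp add: Qd_def)
qed

lemma set_int_minus: "(LINT w:A|lborel. - (f::real\<Rightarrow>real) w) = - (LINT w:A|lborel. f w)"
  by (simp add: sli_eq)

lemma Isig_sym:
  assumes sZ: "sigmaZ > 0" and TT: "T > 0"
    and sym: "\<forall>m\<in>{1..M}. q m = q (M + 1 - m)" and tot: "(\<Sum>m=1..M. q m) = 1" and m: "m \<in> {1..M}"
  shows "Isig sigmaZ T q (M + 1 - m) = - Isig sigmaZ T q m"
proof -
  have e1: "M + 1 - m - 1 = M - m" by simp
  have e2: "M + 1 - m = M - (m - 1)" using m by auto
  have Q1: "Qd q (M + 1 - m - 1) = 1 - Qd q m" unfolding e1 by (rule Qd_rev[OF sym tot]) (use m in auto)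
  have Q2: "Qd q (M + 1 - m) = 1 - Qd q (m - 1)" unfolding e2 by (rule Qd_rev[OF sym tot]) (use m in auto)
  have qm: "q (M + 1 - m) = q m" using sym m by auto
  have "Isig sigmaZ T q (M + 1 - m) = (1 / q m) * (LINT u:{1 - Qd q m..1 - Qd q (m - 1)}|lborel. G_inv sigmaZ T u)"
    unfolding Isig_def Q1 Q2 qm ..
  also have "\<dots> = (1 / q m) * (LINT w:{Qd q (m - 1)..Qd q m}|lborel. G_inv sigmaZ T (1 - w))"
    by (simp only: flip01)
  also have "\<dots> = (1 / q m) * (LINT w:{Qd q (m - 1)..Qd q m}|lborel. - G_inv sigmaZ T w)"
    by (simp only: G_inv_neg[OF sZ TT])
  also have "\<dots> = - Isig sigmaZ T q m"
    by (simp add: set_int_minus Isig_def)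
  finally show ?thesis .
qed

lemma discrete_part:
  assumes sZ: "sigmaZ > 0" and TT: "T > 0" and n: "n \<in> {1,2::nat}"
    and sym: "\<forall>m\<in>{1..M}. q m = q (M + 1 - m)" and tot: "(\<Sum>m=1..M. q m) = 1"
  shows "(\<Sum>m=1..M. post lam v (\<lambda>_. 0) n (Isig sigmaZ T q m) * q m) = 1/2"
proof -
  define S where "S = (\<Sum>m=1..M. post lam v (\<lambda>_. 0) n (Isig sigmaZ T q m) * q m)"
  have "S = (\<Sum>m=1..M. post lam v (\<lambda>_. 0) n (Isig sigmaZ T q (M + 1 - m)) * q (M + 1 - m))"
    unfolding S_def by (rule rev_sum)
  also have "\<dots> = (\<Sum>m=1..M. post lam v (\<lambda>_. 0) n (- Isig sigmaZ T q m) * q m)"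
    by (rule sum.cong[OF refl]) (use sym Isig_sym[OF sZ TT sym tot] in auto)
  finally have "S + S = (\<Sum>m=1..M. (post lam v (\<lambda>_. 0) n (- Isig sigmaZ T q m) + post lam v (\<lambda>_. 0) n (Isig sigmaZ T q m)) * q m)"
    by (simp add: S_def sum.distrib distrib_right)
  also have "\<dots> = 1" using post_sym[OF n] tot by simp
  finally show ?thesis by (simp add: S_def)
qed

lemma Qc_sym:
  assumes int: "integrable lborel q" and tot: "(LINT s|lborel. q s) = 1" and sym: "\<forall>s. q (c + s) = q (c - s)"
  shows "Qc q (c - s) = 1 - Qc q (c + s)"
  using refl_sum[OF int, of c s] sym tot by (simp add: Qc_def)

lemma Qc_mono:
  assumes int: "integrable lborel q" and nn: "\<forall>s. q s \<ge> 0"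
  shows "mono (Qc q)"
proof (rule monoI)
  fix x y :: real assume xy: "x \<le> y"
  have "(LINT t|lborel. indicator {..x} t * q t) \<le> (LINT t|lborel. indicator {..y} t * q t)"
  proof (rule integral_mono)
    show "integrable lborel (\<lambda>t. indicator {..x} t * q t)" by (rule ind_integrable[OF int]) simp
    show "integrable lborel (\<lambda>t. indicator {..y} t * q t)" by (rule ind_integrable[OF int]) simp
    fix t show "indicator {..x} t * q t \<le> indicator {..y} t * q t"
      using xy nn by (auto simp: indicator_def)
  qed
  then show "Qc q x \<le> Qc q y" by (simp add: Qc_def sli_eq)
qed

lemma continuous_part:
  assumes sZ: "sigmaZ > 0" and TT: "T > 0" and n: "n \<in> {1,2::nat}"
    and qm: "q \<in> borel_measurable lborel" and nn: "\<forall>s. q s \<ge> 0"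
    and int: "integrable lborel q" and tot: "(LINT s|lborel. q s) = 1"
    and sym: "\<forall>s. q (c + s) = q (c - s)"
  shows "integrable lborel (\<lambda>s. post lam v (\<lambda>_. 0) n (G_inv sigmaZ T (Qc q s)) * q s) \<and>
         (LINT s|lborel. post lam v (\<lambda>_. 0) n (G_inv sigmaZ T (Qc q s)) * q s) = 1/2"
proof -
  define h where "h s = post lam v (\<lambda>_. 0) n (G_inv sigmaZ T (Qc q s))" for s
  have Qcm: "Qc q \<in> borel_measurable borel" by (rule borel_measurable_mono[OF Qc_mono[OF int nn]])
  have hm: "h \<in> borel_measurable borel"
    unfolding h_def
    by (rule measurable_compose[OF measurable_compose[OF Qcm G_inv_meas[OF sZ TT]] post_meas])
  have qm': "q \<in> borel_measurable borel" using qm by simp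
  have hb: "0 \<le> h s" "h s \<le> 1" for s unfolding h_def using post_bounds(1) post_bounds(2)[OF n] by auto
  have hs: "h (c - s) + h (c + s) = 1" for s
  proof -
    have "G_inv sigmaZ T (Qc q (c - s)) = - G_inv sigmaZ T (Qc q (c + s))"
      unfolding Qc_sym[OF int tot sym] by (rule G_inv_neg[OF sZ TT])
    then show ?thesis unfolding h_def using post_sym[OF n] by simp
  qed
  have hqi: "integrable lborel (\<lambda>s. h s * q s)"
  proof (rule Bochner_Integration.integrable_bound[OF int])
    show "(\<lambda>s. h s * q s) \<in> borel_measurable lborel" using hm qm' by simp
    show "AE x in lborel. norm (h x * q x) \<le> norm (q x)"
      using hb nn by (auto simp: abs_mult intro!: mult_left_le_one_le)
  qed
  define I where "I = (LINT s|lborel. h s * q s)"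
  have I1: "I = (LINT s|lborel. h (c + s) * q (c + s))" unfolding I_def by (rule shift_int)
  have I2: "I = (LINT s|lborel. h (c - s) * q (c + s))"
    unfolding I_def by (subst flip_int[where t=c]) (simp add: sym)
  have i1: "integrable lborel (\<lambda>s. h (c + s) * q (c + s))"
    using lborel_integrable_real_affine_iff[of 1 "\<lambda>s. h s * q s" c] hqi by simp
  have i2: "integrable lborel (\<lambda>s. h (c - s) * q (c + s))"
  proof -
    have "integrable lborel (\<lambda>s. h (c - s) * q (c - s))"
      using lborel_integrable_real_affine_iff[of "-1" "\<lambda>s. h s * q s" c] hqi by simp
    then show ?thesis by (simp add: sym)
  qed
  have "I + I = (LINT s|lborel. h (c + s) * q (c + s)) + (LINT s|lborel. h (c - s) * q (c + s))"
    using I1 I2 by linarith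
  also have "\<dots> = (LINT s|lborel. h (c + s) * q (c + s) + h (c - s) * q (c + s))"
    by (rule Bochner_Integration.integral_add[OF i1 i2, symmetric])
  also have "\<dots> = (LINT s|lborel. q (c + s))"
    using hs by (simp add: distrib_right[symmetric] add.commute)
  also have "\<dots> = 1" using shift_int[of q c] tot by simp
  finally have "I = 1/2" by simp
  then show ?thesis using hqi unfolding I_def h_def by simp
qed


theorem proposition9:
  fixes v p :: "nat \<Rightarrow> real" and lam sigmaZ T :: real
  assumes v12: "v 1 < v 2"
    and p1: "p 1 = 1/2" and p2: "p 2 = 1/2"
    and lam: "lam > 0" and sZ: "sigmaZ > 0" and T: "T > 0"
  shows
    "(\<forall>(M::nat) (q::nat \<Rightarrow> real).
        M \<ge> 1 \<longrightarrow> (\<forall>m\<in>{1..M}. q m > 0) \<longrightarrow> (\<Sum>m=1..M. q m) = 1 \<longrightarrow>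
        (\<forall>m\<in>{1..M}. q m = q (M + 1 - m)) \<longrightarrow>
        (\<forall>n\<in>{1,2}. (\<Sum>m=1..M. post lam v (\<lambda>_. 0) n (Isig sigmaZ T q m) * q m) = p n))
     \<and>
     (\<forall>(q::real \<Rightarrow> real) (c::real).
        q \<in> borel_measurable lborel \<longrightarrow> (\<forall>s. q s \<ge> 0) \<longrightarrow>
        integrable lborel q \<longrightarrow> (LINT s|lborel. q s) = 1 \<longrightarrow>
        (\<forall>s. q (c + s) = q (c - s)) \<longrightarrow>
        (\<forall>n\<in>{1,2}.
           integrable lborel (\<lambda>s. post lam v (\<lambda>_. 0) n (G_inv sigmaZ T (Qc q s)) * q s) \<and>
           (LINT s|lborel. post lam v (\<lambda>_. 0) n (G_inv sigmaZ T (Qc q s)) * q s) = p n))"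
proof (intro conjI allI impI ballI)
  fix M :: nat and q :: "nat \<Rightarrow> real" and n :: nat
  assume "1 \<le> M" "\<forall>m\<in>{1..M}. 0 < q m" and tot: "(\<Sum>m = 1..M. q m) = 1"
    and sym: "\<forall>m\<in>{1..M}. q m = q (M + 1 - m)" and n: "n \<in> {1, 2}"
  have "(\<Sum>m = 1..M. post lam v (\<lambda>_. 0) n (Isig sigmaZ T q m) * q m) = 1/2"
    by (rule discrete_part[OF sZ T n sym tot])
  moreover have "p n = 1/2" using n p1 p2 by auto
  ultimately show "(\<Sum>m = 1..M. post lam v (\<lambda>_. 0) n (Isig sigmaZ T q m) * q m) = p n"
    by simp
next
  fix q :: "real \<Rightarrow> real" and c :: real and n :: nat
  assume "q \<in> borel_measurable lborel" "\<forall>s. 0 \<le> q s" "integrable lborel q"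
    "(LINT s|lborel. q s) = 1" "\<forall>s. q (c + s) = q (c - s)" "n \<in> {1, 2}"
  note cp = continuous_part[OF sZ T this(6) this(1-5), where lam=lam and v=v]
  have pn: "p n = 1/2" using \<open>n \<in> {1,2}\<close> p1 p2 by auto
  show "integrable lborel (\<lambda>s. post lam v (\<lambda>_. 0) n (G_inv sigmaZ T (Qc q s)) * q s)"
    using cp by blast
  show "(LINT s|lborel. post lam v (\<lambda>_. 0) n (G_inv sigmaZ T (Qc q s)) * q s) = p n"
    using conjunct2[OF cp] pn by simp
qed

end
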